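(* Let $A\in\mathbb{R}^{n\times n}$, $T>0$, $\Omega=c+G\mathbf{B}_p\in\mathbb{A}_n$, $\epsilon\in[0,1)$, and $t\in\mathbb{I}\cap[0,T]$ with $t\|A\|\le1$. Then $$\mathfrak{d}\Bigl(\mathcal{I}(t,\Omega,\epsilon),\int_0^t\mathrm{e}^{sA}\Omega\,\mathrm{d}s\Bigr)\le2\bigl((1-\epsilon)t+t^2\|A\|\bigr)\mathrm{e}^{T\|A\|}\|\Omega\|.$$
   Context: A norm $\|\cdot\|$ is fixed on each $\mathbb{R}^k$, $\mathbf{B}_k$ its closed unit ball, matrices with induced norms; $\|M\|=\sup_{x\in M}\|x\|$ for sets. $\mathfrak{d}$ is the Hausdorff distance. $G^\dagger$ is the Moore–Penrose inverse. $\mathbb{A}_n$: sets $c+G\mathbf{B}_p$ with $G\in\mathbb{R}^{n\times p}$, $\mathrm{rank}(G)=n$, regarded with representation $(c,G)$. Set-valued integral $\int_0^tF(s)W\,\mathrm{d}s=\bigcup_w\int_0^tF(s)w(s)\,\mathrm{d}s$ over measurable $w:[0,t]\to W$. $\mathbb{I}=\{t\ge0:\int_0^t\mathrm{e}^{sA}\mathrm{d}s\text{ invertible}\}$. $\mathcal{T}(t,k)=\sum_{j=0}^{k-1}t^{j+1}A^j/(j+1)!$, $\theta(r,k)=\sum_{j=k}^\infty r^j/j!$, $\lambda(t,\Omega,k)=\dfrac{1-\mathrm{e}^{t\|A\|}\theta(t\|A\|,k)\|G^\dagger\|\|c\|}{1+\mathrm{e}^{t\|A\|}\theta(t\|A\|,k)\|G^\dagger\|\|G\|}$,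 $\eta(t,\Omega,\epsilon)=\min\{k\in\mathbb{N}:\lambda(t,\Omega,k)>\epsilon,\ \mathcal{T}(t,k)\text{ invertible}\}$, and $\mathcal{I}(t,\Omega,\epsilon)=\mathcal{T}(t,\eta)[c+\lambda(t,\Omega,\eta)G\mathbf{B}_p]$ with $\eta=\eta(t,\Omega,\epsilon)$. *)

theory Defs
  imports "HOL-Analysis.Analysis"
begin

definition is_norm :: "('a::real_vector \<Rightarrow> real) \<Rightarrow> bool" where
  "is_norm N \<longleftrightarrow> (\<forall>x. N x = 0 \<longleftrightarrow> x = 0) \<and> (\<forall>a x. N (a *\<^sub>R x) = \<bar>a\<bar> * N x)
     \<and> (\<forall>x y. N (x + y) \<le> N x + N y)"

definition unit_ball :: "('a \<Rightarrow> real) \<Rightarrow> 'a set" where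
  "unit_ball N = {x. N x \<le> 1}"

definition ind_norm :: "(real^'q \<Rightarrow> real) \<Rightarrow> (real^'m \<Rightarrow> real) \<Rightarrow> real^'q^'m \<Rightarrow> real" where
  "ind_norm Nd Nc M = Sup {Nc (M *v x) | x. Nd x \<le> 1}"

definition set_norm :: "('a \<Rightarrow> real) \<Rightarrow> 'a set \<Rightarrow> real" where
  "set_norm N X = Sup (N ` X)"

definition hdist :: "('a::real_vector \<Rightarrow> real) \<Rightarrow> 'a set \<Rightarrow> 'a set \<Rightarrow> real" where
  "hdist N X Y = max (SUP x\<in>X. INF y\<in>Y. N (x - y)) (SUP y\<in>Y. INF x\<in>X. N (x - y))"

fun mpow :: "real^'n^'n \<Rightarrow> nat \<Rightarrow> real^'n^'n" where
  "mpow M 0 = mat 1"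
| "mpow M (Suc k) = M ** mpow M k"

definition mexp :: "real^'n^'n \<Rightarrow> real^'n^'n" where
  "mexp M = (\<Sum>k. (1 / fact k) *\<^sub>R mpow M k)"

definition mp_inverse :: "real^'p^'n \<Rightarrow> real^'n^'p" where
  "mp_inverse G = (THE X. G ** X ** G = G \<and> X ** G ** X = X
      \<and> transpose (G ** X) = G ** X \<and> transpose (X ** G) = X ** G)"

definition Iset :: "real^'n^'n \<Rightarrow> real set" where
  "Iset A = {t. t \<ge> 0 \<and> invertible (integral {0..t} (\<lambda>s. mexp (s *\<^sub>R A)))}"

definition Tm :: "real^'n^'n \<Rightarrow> real \<Rightarrow> nat \<Rightarrow> real^'n^'n" where
  "Tm A t k = (\<Sum>j<k. (t ^ (j + 1) / fact (j + 1)) *\<^sub>R mpow A j)"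

definition theta :: "real \<Rightarrow> nat \<Rightarrow> real" where
  "theta r k = (\<Sum>j. r ^ (j + k) / fact (j + k))"

text \<open>lambda(t,Omega,k) for Omega = c + G B_p, with norm NA = ||A||, and given norms.\<close>
definition lam :: "(real^'n \<Rightarrow> real) \<Rightarrow> (real^'p \<Rightarrow> real) \<Rightarrow> real^'n^'n
    \<Rightarrow> real \<Rightarrow> real^'n \<Rightarrow> real^'p^'n \<Rightarrow> nat \<Rightarrow> real" where
  "lam Nn Np A t c G k =
     (let a = ind_norm Nn Nn A; e = exp (t * a) * theta (t * a) k in
      (1 - e * ind_norm Nn Np (mp_inverse G) * Nn c) /
      (1 + e * ind_norm Nn Np (mp_inverse G) * ind_norm Np Nn G))"

definition eta :: "(real^'n \<Rightarrow> real) \<Rightarrow> (real^'p \<Rightarrow> real) \<Rightarrow> real^'n^'n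
    \<Rightarrow> real \<Rightarrow> real^'n \<Rightarrow> real^'p^'n \<Rightarrow> real \<Rightarrow> nat" where
  "eta Nn Np A t c G \<epsilon> = (LEAST k. lam Nn Np A t c G k > \<epsilon> \<and> invertible (Tm A t k))"

definition Iapprox :: "(real^'n \<Rightarrow> real) \<Rightarrow> (real^'p \<Rightarrow> real) \<Rightarrow> real^'n^'n
    \<Rightarrow> real \<Rightarrow> real^'n \<Rightarrow> real^'p^'n \<Rightarrow> real \<Rightarrow> (real^'n) set" where
  "Iapprox Nn Np A t c G \<epsilon> =
     (let k = eta Nn Np A t c G \<epsilon> in
      (\<lambda>x. Tm A t k *v x) ` {c + lam Nn Np A t c G k *\<^sub>R (G *v b) | b. b \<in> unit_ball Np})"

definition set_integral_mv :: "(real \<Rightarrow> real^'p^'n) \<Rightarrow> real \<Rightarrow> (real^'p) set \<Rightarrow> (real^'n) set" where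
  "set_integral_mv F t W =
     {integral {0..t} (\<lambda>s. F s *v w s) | w. w measurable_on {0..t} \<and> (\<forall>s\<in>{0..t}. w s \<in> W)}"

end

theory Submission
  imports Defs
begin


locale gnorm =
  fixes N :: "'a::euclidean_space \<Rightarrow> real"
  assumes isn: "is_norm N"
begin

lemma zero_iff: "N x = 0 \<longleftrightarrow> x = 0" using isn unfolding is_norm_def by blast
lemma scale: "N (a *\<^sub>R x) = \<bar>a\<bar> * N x" using isn unfolding is_norm_def by blast
lemma triangle: "N (x + y) \<le> N x + N y" using isn unfolding is_norm_def by blast
lemma zero[simp]: "N 0 = 0" using zero_iff by simp
lemma minus: "N (- x) = N x" using scale[of "-1" x] by simp
lemma nonneg: "0 \<le> N x"
proof -
  have "N 0 \<le> N x + N (-x)" using triangle[of x "-x"] by simp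
  then show ?thesis by (simp add: minus)
qed
lemma diff_le: "N (x - y) \<le> N x + N y"
  using triangle[of x "-y"] by (simp add: minus)
lemma commute_diff: "N (x - y) = N (y - x)"
  using minus[of "x - y"] by simp
lemma rev_tri: "\<bar>N x - N y\<bar> \<le> N (x - y)"
proof -
  have "N x \<le> N (x - y) + N y" using triangle[of "x-y" y] by simp
  moreover have "N y \<le> N (y - x) + N x" using triangle[of "y-x" x] by simp
  ultimately show ?thesis using commute_diff[of x y] by linarith
qed
lemma sum_le: "N (sum f S) \<le> (\<Sum>i\<in>S. N (f i))"
proof (induction S rule: infinite_finite_induct)
  case (insert x F)
  then show ?case using triangle[of "f x" "sum f F"] by simp
qed auto

lemma upper: "\<exists>C>0. \<forall>x. N x \<le> C * norm x"
proof -
  define C where "C = (\<Sum>b\<in>Basis. N b) + 1"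
  have C0: "C > 0" unfolding C_def using nonneg
    by (metis add_nonneg_pos sum_nonneg zero_less_one)
  have "N x \<le> C * norm x" for x
  proof -
    have "N x = N (\<Sum>b\<in>Basis. (x \<bullet> b) *\<^sub>R b)" by (simp add: euclidean_representation)
    also have "\<dots> \<le> (\<Sum>b\<in>Basis. N ((x \<bullet> b) *\<^sub>R b))" by (rule sum_le)
    also have "\<dots> = (\<Sum>b\<in>Basis. \<bar>x \<bullet> b\<bar> * N b)" by (simp add: scale)
    also have "\<dots> \<le> (\<Sum>b\<in>Basis. norm x * N b)"
      by (intro sum_mono mult_right_mono) (auto simp: Basis_le_norm nonneg)
    also have "\<dots> = norm x * (\<Sum>b\<in>Basis. N b)" by (simp add: sum_distrib_left)
    also have "\<dots> \<le> C * norm x" unfolding C_def by (simp add: algebra_simps)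
    finally show ?thesis .
  qed
  with C0 show ?thesis by blast
qed

lemma cont: "continuous_on S N"
proof -
  obtain C where C: "C > 0" "\<And>x. N x \<le> C * norm x" using upper by blast
  have lip: "\<bar>N x - N y\<bar> \<le> C * dist x y" for x y
    using rev_tri[of x y] C(2)[of "x - y"] by (simp add: dist_norm)
  show ?thesis unfolding continuous_on_iff
  proof (intro ballI allI impI)
    fix x e assume "(0::real) < e"
    show "\<exists>d>0. \<forall>x'\<in>S. dist x' x < d \<longrightarrow> dist (N x') (N x) < e"
    proof (intro exI[of _ "e / C"] conjI ballI impI)
      show "e / C > 0" using C(1) \<open>0 < e\<close> by simp
      fix x' assume "dist x' x < e / C"
      then have "C * dist x' x < e" using C(1) by (simp add: field_simps)
      then show "dist (N x') (N x) < e" using lip[of x' x]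
        by (simp add: dist_real_def)
    qed
  qed
qed

lemma lower: "\<exists>c>0. \<forall>x. c * norm x \<le> N x"
proof -
  have cpt: "compact (sphere (0::'a) 1)" by simp
  obtain b :: 'a where "b \<in> Basis" by (meson ex_in_conv nonempty_Basis)
  then have ne: "sphere (0::'a) 1 \<noteq> {}" unfolding sphere_def
    by (metis (mono_tags, lifting) dist_0_norm empty_Collect_eq norm_Basis)
  obtain x0 where x0: "x0 \<in> sphere 0 1" "\<And>y. y \<in> sphere 0 1 \<Longrightarrow> N x0 \<le> N y"
    using continuous_attains_inf[OF cpt ne cont] by blast
  have "x0 \<noteq> 0" using x0(1) by auto
  then have pos: "N x0 > 0" using nonneg[of x0] zero_iff[of x0] by linarith
  have "N x0 * norm x \<le> N x" for x
  proof (cases "x = 0")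
    case False
    have "(1 / norm x) *\<^sub>R x \<in> sphere 0 1" using False by (simp add: sphere_def)
    then have "N x0 \<le> N ((1 / norm x) *\<^sub>R x)" by (rule x0(2))
    also have "\<dots> = N x / norm x" by (simp add: scale)
    finally show ?thesis using False by (simp add: field_simps)
  qed simp
  with pos show ?thesis by blast
qed

lemma closed_le: "closed {x. N x \<le> r}"
  by (rule closed_Collect_le) (auto simp: cont continuous_on_const)

lemma bounded_le: "bounded {x. N x \<le> r}"
proof -
  obtain c where c: "c > 0" "\<And>x. c * norm x \<le> N x" using lower by blast
  show ?thesis unfolding bounded_iff
    by (rule exI[of _ "r / c"]) (use c in \<open>auto simp: field_simps intro: order_trans\<close>)
qed

lemma compact_le: "compact {x. N x \<le> r}"
  using closed_le bounded_le by (simp add: compact_eq_bounded_closed)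

lemma convex_le: "convex {x. N x \<le> r}"
  unfolding convex_def
proof (clarify)
  fix x y :: 'a and u v :: real
  assume "N x \<le> r" "N y \<le> r" "0 \<le> u" "0 \<le> v" "u + v = 1"
  then have "N (u *\<^sub>R x + v *\<^sub>R y) \<le> u * N x + v * N y"
    using triangle[of "u *\<^sub>R x" "v *\<^sub>R y"] by (simp add: scale)
  also have "\<dots> \<le> u * r + v * r" using \<open>N x \<le> r\<close> \<open>N y \<le> r\<close> \<open>0 \<le> u\<close> \<open>0 \<le> v\<close>
    by (intro add_mono mult_left_mono) auto
  also have "\<dots> = r" using \<open>u + v = 1\<close> by (metis distrib_left mult.commute mult_1)
  finally show "N (u *\<^sub>R x + v *\<^sub>R y) \<le> r" .
qed

end


lemma mean_in:
  fixes f :: "real \<Rightarrow> 'b::euclidean_space"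
  assumes f: "f integrable_on {0..t}" and t: "t > 0" and K: "closed K" "convex K"
    and fK: "\<And>s. s \<in> {0..t} \<Longrightarrow> f s \<in> K"
  shows "(1/t) *\<^sub>R integral {0..t} f \<in> K"
proof (rule ccontr)
  assume nK: "(1/t) *\<^sub>R integral {0..t} f \<notin> K"
  obtain a b where ab: "inner a ((1/t) *\<^sub>R integral {0..t} f) < b" "\<forall>x\<in>K. inner a x > b"
    using separating_hyperplane_closed_point[OF K(2) K(1) nK] by blast
  have lin: "integral {0..t} (\<lambda>s. inner a (f s)) = inner a (integral {0..t} f)"
    using integral_linear[OF f bounded_linear_inner_right[of a]] by (simp add: o_def)
  have int: "(\<lambda>s. inner a (f s)) integrable_on {0..t}"
    using integrable_linear[OF f bounded_linear_inner_right[of a]] by (simp add: o_def)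
  have "integral {0..t} (\<lambda>s. b) \<le> integral {0..t} (\<lambda>s. inner a (f s))"
    using ab(2) fK by (intro integral_le int) (auto intro: less_imp_le)
  then have "t * b \<le> inner a (integral {0..t} f)" using t lin by simp
  then have "b \<le> inner a ((1/t) *\<^sub>R integral {0..t} f)" using t
    by (simp add: field_simps)
  with ab(1) show False by simp
qed

context gnorm begin

lemma series_bound:
  assumes h: "\<And>j. N (f j) \<le> h j" "summable h"
  shows "summable f" "N (suminf f) \<le> suminf h"
proof -
  obtain c where c: "c > 0" "\<And>x. c * norm x \<le> N x" using lower by blast
  have "norm (f j) \<le> h j / c" for j
  proof -
    have "c * norm (f j) \<le> h j" using h(1)[of j] c(2)[of "f j"] by linarith
    then show ?thesis using c(1) by (simp add: field_simps)
  qed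
  moreover have "summable (\<lambda>j. h j / c)" using h(2) by (rule summable_divide)
  ultimately show sf: "summable f"
    by (intro summable_comparison_test[of f "\<lambda>j. h j / c"]) auto
  have "isCont N x" for x using cont[of UNIV] by (simp add: continuous_on_eq_continuous_at)
  then have l1: "(\<lambda>m. N (\<Sum>j<m. f j)) \<longlonglongrightarrow> N (suminf f)"
    using isCont_tendsto_compose summable_LIMSEQ[OF sf] by blast
  have l2: "(\<lambda>m. \<Sum>j<m. h j) \<longlonglongrightarrow> suminf h" using summable_LIMSEQ[OF h(2)] .
  show "N (suminf f) \<le> suminf h"
  proof (rule LIMSEQ_le[OF l1 l2], intro exI allI impI)
    fix m :: nat
    have "N (\<Sum>j<m. f j) \<le> (\<Sum>j<m. N (f j))" by (rule sum_le)
    also have "\<dots> \<le> (\<Sum>j<m. h j)" by (intro sum_mono h(1))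
    finally show "N (\<Sum>j<m. f j) \<le> (\<Sum>j<m. h j)" .
  qed
qed

lemma int_bound:
  fixes f :: "real \<Rightarrow> 'a"
  assumes f: "f integrable_on {0..t}" and g: "g integrable_on {0..t}" and t: "t > 0"
    and fg: "\<And>s. s \<in> {0..t} \<Longrightarrow> N (f s) \<le> g s"
  shows "N (integral {0..t} f) \<le> integral {0..t} g"
proof -
  have h1: "((\<lambda>s. (f s, 0::real)) has_integral (integral {0..t} f, 0)) {0..t}"
    using has_integral_linear[OF integrable_integral[OF f]
        bounded_linear_Pair[OF bounded_linear_ident bounded_linear_zero]] by (simp add: o_def)
  have h2: "((\<lambda>s. (0::'a, g s)) has_integral (0, integral {0..t} g)) {0..t}"
    using has_integral_linear[OF integrable_integral[OF g]
        bounded_linear_Pair[OF bounded_linear_zero bounded_linear_ident]] by (simp add: o_def)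
  have h: "((\<lambda>s. (f s, g s)) has_integral (integral {0..t} f, integral {0..t} g)) {0..t}"
    using has_integral_add[OF h1 h2] by simp
  define K where "K = {p::'a \<times> real. N (fst p) \<le> snd p}"
  have cK: "closed K" unfolding K_def
    by (intro closed_Collect_le continuous_on_compose2[OF cont continuous_on_fst]
        continuous_on_snd) auto
  have vK: "convex K"
  proof (rule convexI)
    fix p q :: "'a \<times> real" and u v :: real
    assume "p \<in> K" "q \<in> K" "0 \<le> u" "0 \<le> v" "u + v = 1"
    then have pq: "N (fst p) \<le> snd p" "N (fst q) \<le> snd q" by (auto simp: K_def)
    have "N (u *\<^sub>R fst p + v *\<^sub>R fst q) \<le> u * N (fst p) + v * N (fst q)"
      using triangle[of "u *\<^sub>R fst p" "v *\<^sub>R fst q"] \<open>0 \<le> u\<close> \<open>0 \<le> v\<close> by (simp add: scale)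
    also have "\<dots> \<le> u * snd p + v * snd q" using pq \<open>0 \<le> u\<close> \<open>0 \<le> v\<close>
      by (intro add_mono mult_left_mono) auto
    finally show "u *\<^sub>R p + v *\<^sub>R q \<in> K" by (simp add: K_def)
  qed
  have "(1/t) *\<^sub>R integral {0..t} (\<lambda>s. (f s, g s)) \<in> K"
    using fg by (intro mean_in[OF has_integral_integrable[OF h] t cK vK]) (auto simp: K_def)
  then have "N ((1/t) *\<^sub>R integral {0..t} f) \<le> (1/t) * integral {0..t} g"
    using integral_unique[OF h] by (simp add: K_def)
  then have "(1/t) * N (integral {0..t} f) \<le> (1/t) * integral {0..t} g"
    using t by (simp add: scale)
  then show ?thesis using t by (simp add: divide_right_mono_neg) (smt (verit) divide_strict_right_mono)
qed

end


lemma ind_norm_bound: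
  fixes Nd :: "real^'q \<Rightarrow> real" and Nc :: "real^'m \<Rightarrow> real" and M :: "real^'q^'m"
  assumes d: "is_norm Nd" and c: "is_norm Nc"
  shows "Nc (M *v x) \<le> ind_norm Nd Nc M * Nd x" and "0 \<le> ind_norm Nd Nc M"
proof -
  interpret d: gnorm Nd by (rule gnorm.intro[OF d])
  interpret c: gnorm Nc by (rule gnorm.intro[OF c])
  define S where "S = {Nc (M *v x) | x. Nd x \<le> 1}"
  obtain cd where cd: "cd > 0" "\<And>x. cd * norm x \<le> Nd x" using d.lower by blast
  obtain Cc where Cc: "Cc > 0" "\<And>x. Nc x \<le> Cc * norm x" using c.upper by blast
  obtain L where L: "L > 0" "\<And>x. norm (M *v x) \<le> norm x * L"
    using bounded_linear.pos_bounded[OF matrix_vector_mul_bounded_linear[of M]] by blast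
  have bdd: "bdd_above S" unfolding S_def bdd_above_def
  proof (intro exI[of _ "Cc * L / cd"] allI impI, clarify)
    fix x assume "Nd x \<le> 1"
    then have "norm x \<le> 1 / cd" using cd(2)[of x] cd(1) by (simp add: field_simps)
    then have "norm x * L \<le> (1 / cd) * L" using L(1) by (intro mult_right_mono) auto
    then have "norm (M *v x) \<le> L / cd" using L(2)[of x] by simp
    then show "Nc (M *v x) \<le> Cc * L / cd" using Cc(2)[of "M *v x"] Cc(1)
      by (smt (verit, ccfv_SIG) mult_left_mono times_divide_eq_right)
  qed
  have z: "0 \<in> S" unfolding S_def by (rule CollectI, rule exI[of _ 0]) simp
  show nn: "0 \<le> ind_norm Nd Nc M" unfolding ind_norm_def S_def[symmetric]
    using cSup_upper[OF z bdd] .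
  show "Nc (M *v x) \<le> ind_norm Nd Nc M * Nd x"
  proof (cases "x = 0")
    case True then show ?thesis by simp
  next
    case False
    then have pos: "Nd x > 0" using d.nonneg[of x] d.zero_iff[of x] by linarith
    have "Nc (M *v ((1 / Nd x) *\<^sub>R x)) \<in> S" unfolding S_def
      using pos by (auto simp: d.scale)
    then have "Nc (M *v ((1 / Nd x) *\<^sub>R x)) \<le> ind_norm Nd Nc M"
      unfolding ind_norm_def S_def[symmetric] using cSup_upper[OF _ bdd] by blast
    moreover have "Nc (M *v ((1 / Nd x) *\<^sub>R x)) = Nc (M *v x) / Nd x"
      using pos by (simp add: matrix_vector_mult_scaleR c.scale)
    ultimately show ?thesis using pos by (simp add: field_simps)
  qed
qed

lemma mat_norm_bound:
  fixes N :: "real^'n \<Rightarrow> real"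
  assumes "is_norm N"
  shows "\<exists>K\<ge>0. \<forall>(M::real^'n^'n) \<beta>. (\<forall>v. N (M *v v) \<le> \<beta> * N v) \<longrightarrow> norm M \<le> K * \<beta>"
proof -
  interpret gnorm N by (rule gnorm.intro[OF assms])
  obtain c where c: "c > 0" "\<And>x. c * norm x \<le> N x" using lower by blast
  define K where "K = real CARD('n) * (\<Sum>l\<in>UNIV. N (axis l 1)) / c"
  have K0: "K \<ge> 0" unfolding K_def using c(1) nonneg by (simp add: sum_nonneg)
  have "norm M \<le> K * \<beta>" if hM: "\<forall>v. N (M *v v) \<le> \<beta> * N v" for M :: "real^'n^'n" and \<beta>
  proof -
    have comp: "\<bar>M $ i $ l\<bar> \<le> \<beta> * N (axis l 1) / c" for i l
    proof -
      have "M $ i $ l = (M *v axis l 1) $ i"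
        by (simp add: matrix_vector_mult_basis column_def)
      then have "\<bar>M $ i $ l\<bar> \<le> norm (M *v axis l 1)" using component_le_norm_cart by metis
      also have "\<dots> \<le> N (M *v axis l 1) / c" using c(2)[of "M *v axis l 1"] c(1)
        by (simp add: field_simps)
      also have "\<dots> \<le> \<beta> * N (axis l 1) / c" using hM c(1) by (simp add: divide_right_mono)
      finally show ?thesis .
    qed
    have "norm M \<le> (\<Sum>i\<in>UNIV. norm (M $ i))"
      unfolding norm_vec_def by (rule L2_set_le_sum) simp
    also have "\<dots> \<le> (\<Sum>i\<in>UNIV. \<Sum>l\<in>UNIV. \<bar>M $ i $ l\<bar>)"
      by (intro sum_mono norm_le_l1_cart)
    also have "\<dots> \<le> (\<Sum>i\<in>(UNIV::'n set). \<Sum>l\<in>UNIV. \<beta> * N (axis l 1) / c)"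
      by (intro sum_mono comp)
    also have "\<dots> = K * \<beta>" unfolding K_def
      by (simp add: sum_distrib_left[symmetric] sum_divide_distrib[symmetric])
    finally show ?thesis .
  qed
  with K0 show ?thesis by blast
qed


lemma exp_series: "(\<lambda>n. r ^ n / fact n) sums exp (r::real)"
proof -
  have "(\<lambda>n. r ^ n /\<^sub>R fact n) = (\<lambda>n. r ^ n / fact n)"
    by (simp add: divide_inverse mult.commute)
  then show ?thesis using exp_converges[of r] by simp
qed

lemma theta_eq: "theta r k = exp r - (\<Sum>j<k. r ^ j / fact j)"
  and theta_summable: "summable (\<lambda>j. r ^ (j + k) / fact (j + k))"
proof -
  have s: "summable (\<lambda>n. r ^ n / fact n)" using exp_series by (rule sums_summable)
  show "summable (\<lambda>j. r ^ (j + k) / fact (j + k))"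
    using summable_ignore_initial_segment[OF s, of k] by simp
  have "exp r = (\<Sum>n. r ^ n / fact n)" using exp_series by (simp add: sums_iff)
  also have "\<dots> = (\<Sum>j. r ^ (j + k) / fact (j + k)) + (\<Sum>j<k. r ^ j / fact j)"
    by (rule suminf_split_initial_segment[OF s])
  finally show "theta r k = exp r - (\<Sum>j<k. r ^ j / fact j)" unfolding theta_def by simp
qed

lemma theta_nonneg: "0 \<le> r \<Longrightarrow> 0 \<le> theta r k"
  unfolding theta_def by (intro suminf_nonneg theta_summable) auto

lemma theta_le1: assumes "0 \<le> r" "1 \<le> k" shows "theta r k \<le> exp r - 1"
proof -
  have "(\<Sum>j<1. r ^ j / fact j) \<le> (\<Sum>j<k. r ^ j / fact j)"
    using assms by (intro sum_mono2) auto
  then show ?thesis unfolding theta_eq by simp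
qed

lemma theta_mono: assumes "0 \<le> r" "r \<le> r'" shows "theta r k \<le> theta r' k"
  unfolding theta_def
  by (intro suminf_le theta_summable allI divide_right_mono power_mono) (use assms in auto)

lemma theta_lim: "(\<lambda>k. theta r k) \<longlonglongrightarrow> 0"
proof -
  have s: "summable (\<lambda>n. r ^ n / fact n)" using exp_series by (rule sums_summable)
  have "(\<lambda>k. \<Sum>j<k. r ^ j / fact j) \<longlonglongrightarrow> exp r"
    using exp_series by (simp add: sums_def)
  then have "(\<lambda>k. exp r - (\<Sum>j<k. r ^ j / fact j)) \<longlonglongrightarrow> exp r - exp r"
    by (intro tendsto_intros)
  then show ?thesis unfolding theta_eq by simp
qed

lemma exp_m1_le: assumes "0 \<le> (r::real)" shows "exp r - 1 \<le> r * exp r"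
proof -
  have "1 - r \<le> exp (- r)" using exp_ge_add_one_self[of "-r"] by simp
  then have "(1 - r) * exp r \<le> exp (-r) * exp r" by (intro mult_right_mono) auto
  then show ?thesis by (simp add: exp_minus field_simps)
qed

lemma mpow_scale: "mpow (s *\<^sub>R A) j = s ^ j *\<^sub>R mpow A j"
  by (induction j) (auto simp: matrix_scalar_ac scalar_matrix_assoc mult.commute)

lemma linear_mv: "bounded_linear (\<lambda>M::real^'n^'m. M *v v)"
proof -
  have "linear (\<lambda>M::real^'n^'m. M *v v)"
    by (rule linearI) (auto simp: matrix_vector_mult_add_rdistrib scaleR_matrix_vector_assoc)
  then show ?thesis by (simp add: linear_conv_bounded_linear)
qed


locale msetup = gnorm Nn for Nn :: "real^'n \<Rightarrow> real" + fixes A :: "real^'n^'n"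
begin

definition "a = ind_norm Nn Nn A"

lemma a_nonneg: "0 \<le> a" unfolding a_def using ind_norm_bound(2)[OF isn isn] .
lemma A_bound: "Nn (A *v v) \<le> a * Nn v" unfolding a_def using ind_norm_bound(1)[OF isn isn] .

lemma mpow_bound: "Nn (mpow A j *v v) \<le> a ^ j * Nn v"
proof (induction j)
  case 0 then show ?case by simp
next
  case (Suc j)
  have "Nn (mpow A (Suc j) *v v) = Nn (A *v (mpow A j *v v))" by (simp add: matrix_vector_mul_assoc)
  also have "\<dots> \<le> a * Nn (mpow A j *v v)" by (rule A_bound)
  also have "\<dots> \<le> a * (a ^ j * Nn v)" using Suc a_nonneg by (intro mult_left_mono)
  finally show ?case by (simp add: algebra_simps)
qed

lemma smv: "(k *\<^sub>R M) *v v = k *\<^sub>R (M *v v)" for M :: "real^'n^'n"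
  by (rule scaleR_matrix_vector_assoc[symmetric])

lemma term_bound: "Nn (((s ^ j / fact j) *\<^sub>R mpow A j) *v v) \<le> (\<bar>s\<bar> * a) ^ j / fact j * Nn v"
proof -
  have "Nn (((s ^ j / fact j) *\<^sub>R mpow A j) *v v) = \<bar>s\<bar> ^ j / fact j * Nn (mpow A j *v v)"
    unfolding smv scale by (simp add: power_abs)
  also have "\<dots> \<le> \<bar>s\<bar> ^ j / fact j * (a ^ j * Nn v)"
    by (intro mult_left_mono mpow_bound) auto
  finally show ?thesis by (simp add: power_mult_distrib)
qed

lemma mterm_eq: "(1 / fact j) *\<^sub>R mpow (s *\<^sub>R A) j = (s ^ j / fact j) *\<^sub>R mpow A j"
  by (simp add: mpow_scale)

lemma mterm_norm: obtains K where "K \<ge> 0"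
  "\<And>s j. norm ((s ^ j / fact j) *\<^sub>R mpow A j) \<le> K * ((\<bar>s\<bar> * a) ^ j / fact j)"
proof -
  obtain K where K: "K \<ge> 0" "\<And>(M::real^'n^'n) \<beta>. (\<forall>v. Nn (M *v v) \<le> \<beta> * Nn v) \<Longrightarrow> norm M \<le> K * \<beta>"
    using mat_norm_bound[OF isn] by blast
  have "norm ((s ^ j / fact j) *\<^sub>R mpow A j) \<le> K * ((\<bar>s\<bar> * a) ^ j / fact j)" for s j
    by (rule K(2)) (rule allI, rule term_bound)
  then show ?thesis using K(1) that by blast
qed

lemma mexp_summable: "summable (\<lambda>j. (s ^ j / fact j) *\<^sub>R mpow A j)"
proof -
  obtain K where K: "K \<ge> 0" "\<And>s j. norm ((s ^ j / fact j) *\<^sub>R mpow A j) \<le> K * ((\<bar>s\<bar> * a) ^ j / fact j)"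
    using mterm_norm by blast
  have "summable (\<lambda>j. (\<bar>s\<bar> * a) ^ j / fact j)"
    using exp_series by (rule sums_summable)
  then have sm: "summable (\<lambda>j. K * ((\<bar>s\<bar> * a) ^ j / fact j))"
    by (rule summable_mult)
  show ?thesis
    by (rule summable_comparison_test[OF _ sm]) (use K(2) in blast)
qed

lemma mexp_eq: "mexp (s *\<^sub>R A) = (\<Sum>j. (s ^ j / fact j) *\<^sub>R mpow A j)"
  unfolding mexp_def mterm_eq ..

lemma mexp_v: "mexp (s *\<^sub>R A) *v v = (\<Sum>j. (s ^ j / fact j) *\<^sub>R (mpow A j *v v))"
  and mexp_v_summable: "summable (\<lambda>j. (s ^ j / fact j) *\<^sub>R (mpow A j *v v))"
proof -
  have "mexp (s *\<^sub>R A) *v v = (\<Sum>j. ((s ^ j / fact j) *\<^sub>R mpow A j) *v v)"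
    unfolding mexp_eq by (rule bounded_linear.suminf[OF linear_mv mexp_summable])
  then show "mexp (s *\<^sub>R A) *v v = (\<Sum>j. (s ^ j / fact j) *\<^sub>R (mpow A j *v v))"
    by (simp only: smv)
  show "summable (\<lambda>j. (s ^ j / fact j) *\<^sub>R (mpow A j *v v))"
    using bounded_linear.summable[OF linear_mv[of v] mexp_summable[of s]]
    by (simp only: smv)
qed

end

context msetup begin

lemma tail_bound:
  "Nn (mexp (s *\<^sub>R A) *v v - (\<Sum>j<k. (s ^ j / fact j) *\<^sub>R (mpow A j *v v)))
     \<le> theta (\<bar>s\<bar> * a) k * Nn v"
proof -
  define f where "f j = (s ^ j / fact j) *\<^sub>R (mpow A j *v v)" for j
  have sf: "summable f" unfolding f_def by (rule mexp_v_summable)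
  have eq: "mexp (s *\<^sub>R A) *v v - (\<Sum>j<k. f j) = (\<Sum>j. f (j + k))"
    using suminf_split_initial_segment[OF sf, of k] unfolding mexp_v f_def[symmetric] by simp
  have hb: "Nn (f (j + k)) \<le> (\<bar>s\<bar> * a) ^ (j + k) / fact (j + k) * Nn v" for j
    unfolding f_def using term_bound[of s "j + k" v] by (simp only: smv)
  have hs: "summable (\<lambda>j. (\<bar>s\<bar> * a) ^ (j + k) / fact (j + k) * Nn v)"
    by (intro summable_mult2 theta_summable)
  have "Nn (\<Sum>j. f (j + k)) \<le> (\<Sum>j. (\<bar>s\<bar> * a) ^ (j + k) / fact (j + k) * Nn v)"
    by (rule series_bound(2)[OF hb hs])
  also have "\<dots> = theta (\<bar>s\<bar> * a) k * Nn v" unfolding theta_def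
    by (rule suminf_mult2[symmetric, OF theta_summable])
  finally show ?thesis using eq unfolding f_def by simp
qed

lemma exp_bound: assumes "0 \<le> s" shows "Nn (mexp (s *\<^sub>R A) *v v - v) \<le> (exp (s * a) - 1) * Nn v"
  and "Nn (mexp (s *\<^sub>R A) *v v) \<le> exp (s * a) * Nn v"
proof -
  have "Nn (mexp (s *\<^sub>R A) *v v - v) \<le> theta (\<bar>s\<bar> * a) 1 * Nn v"
    using tail_bound[of s v 1] by simp
  also have "theta (\<bar>s\<bar> * a) 1 = exp (s * a) - 1" using assms by (simp add: theta_eq)
  finally show 1: "Nn (mexp (s *\<^sub>R A) *v v - v) \<le> (exp (s * a) - 1) * Nn v" .
  have "Nn (mexp (s *\<^sub>R A) *v v) \<le> Nn (mexp (s *\<^sub>R A) *v v - v) + Nn v"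
    using triangle[of "mexp (s *\<^sub>R A) *v v - v" v] by simp
  then show "Nn (mexp (s *\<^sub>R A) *v v) \<le> exp (s * a) * Nn v" using 1 by (simp add: algebra_simps)
qed

lemma mexp_cont: "continuous_on {0..t} (\<lambda>s. mexp (s *\<^sub>R A))"
proof -
  obtain K where K: "K \<ge> 0" "\<And>s j. norm ((s ^ j / fact j) *\<^sub>R mpow A j) \<le> K * ((\<bar>s\<bar> * a) ^ j / fact j)"
    using mterm_norm by blast
  have ul: "uniform_limit {0..t} (\<lambda>n s. \<Sum>i<n. (s ^ i / fact i) *\<^sub>R mpow A i)
      (\<lambda>s. \<Sum>i. (s ^ i / fact i) *\<^sub>R mpow A i) sequentially"
  proof (rule Weierstrass_m_test)
    fix n and s :: real assume "s \<in> {0..t}"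
    then have "\<bar>s\<bar> * a \<le> \<bar>t\<bar> * a" using a_nonneg by (intro mult_right_mono) auto
    then have "(\<bar>s\<bar> * a) ^ n / fact n \<le> (\<bar>t\<bar> * a) ^ n / fact n"
      using a_nonneg by (intro divide_right_mono power_mono) auto
    then have "K * ((\<bar>s\<bar> * a) ^ n / fact n) \<le> K * ((\<bar>t\<bar> * a) ^ n / fact n)"
      using K(1) by (rule mult_left_mono)
    then show "norm ((s ^ n / fact n) *\<^sub>R mpow A n) \<le> K * ((\<bar>t\<bar> * a) ^ n / fact n)"
      using K(2)[of s n] by linarith
  next
    have "summable (\<lambda>j. (\<bar>t\<bar> * a) ^ j / fact j)"
      using exp_series by (rule sums_summable)
    then show "summable (\<lambda>n. K * ((\<bar>t\<bar> * a) ^ n / fact n))"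
      by (rule summable_mult)
  qed
  have cn: "continuous_on {0..t} (\<lambda>s. \<Sum>i<n. (s ^ i / fact i) *\<^sub>R mpow A i)" for n
    by (intro continuous_intros) auto
  have "continuous_on {0..t} (\<lambda>s. \<Sum>i. (s ^ i / fact i) *\<^sub>R mpow A i)"
    by (rule uniform_limit_theorem[OF always_eventually ul]) (use cn in auto)
  then show ?thesis unfolding mexp_eq .
qed

end


lemma sum_mv: "(\<Sum>j<k. M j) *v v = (\<Sum>j<k. M j *v v)" for k :: nat and M :: "nat \<Rightarrow> real^'n^'m"
  by (induction k) (auto simp: matrix_vector_mult_add_rdistrib)

context msetup begin

lemma Tm_v: "Tm A t k *v v = (\<Sum>j<k. (t ^ (j + 1) / fact (j + 1)) *\<^sub>R (mpow A j *v v))"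
  unfolding Tm_def sum_mv smv ..

lemma Tm_bound: assumes "0 \<le> t" shows "Nn (Tm A t k *v v) \<le> t * exp (t * a) * Nn v"
proof -
  have "Nn (Tm A t k *v v) \<le> (\<Sum>j<k. Nn ((t ^ (j + 1) / fact (j + 1)) *\<^sub>R (mpow A j *v v)))"
    unfolding Tm_v by (rule sum_le)
  also have "\<dots> \<le> (\<Sum>j<k. t * ((t * a) ^ j / fact j) * Nn v)"
  proof (intro sum_mono)
    fix j
    have f: "fact j \<le> (fact (j + 1) :: real)" by (simp add: fact_mono)
    have "Nn ((t ^ (j + 1) / fact (j + 1)) *\<^sub>R (mpow A j *v v)) = t ^ (j + 1) / fact (j + 1) * Nn (mpow A j *v v)"
      using assms by (simp add: scale)
    also have "\<dots> \<le> t ^ (j + 1) / fact j * (a ^ j * Nn v)"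
    proof (rule mult_mono)
      show "t ^ (j + 1) / fact (j + 1) \<le> t ^ (j + 1) / fact j"
        using f assms by (intro divide_left_mono) auto
    qed (use assms mpow_bound nonneg in auto)
    also have "\<dots> = t * ((t * a) ^ j / fact j) * Nn v" by (simp add: power_mult_distrib)
    finally show "Nn ((t ^ (j + 1) / fact (j + 1)) *\<^sub>R (mpow A j *v v)) \<le> t * ((t * a) ^ j / fact j) * Nn v" .
  qed
  also have "\<dots> = t * (\<Sum>j<k. (t * a) ^ j / fact j) * Nn v"
    by (simp add: sum_distrib_left sum_distrib_right mult.assoc)
  also have "\<dots> \<le> t * exp (t * a) * Nn v"
  proof -
    have "(\<Sum>j<k. (t * a) ^ j / fact j) \<le> (\<Sum>j. (t * a) ^ j / fact j)"
      using assms a_nonneg by (intro sum_le_suminf sums_summable[OF exp_series]) auto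
    also have "\<dots> = exp (t * a)" using exp_series by (simp add: sums_iff)
    finally show ?thesis using assms nonneg by (intro mult_right_mono mult_left_mono) auto
  qed
  finally show ?thesis .
qed

definition "Q s k = (\<Sum>j<k. (s ^ j / fact j) *\<^sub>R mpow A j)"

lemma Q_integral: assumes "0 \<le> t" shows "((\<lambda>s. Q s k) has_integral Tm A t k) {0..t}"
proof -
  define F where "F s = (\<Sum>j<k. (s ^ (j + 1) / fact (j + 1)) *\<^sub>R mpow A j)" for s
  have d: "(F has_vector_derivative Q s k) (at s within {0..t})" for s
    unfolding F_def Q_def
  proof (rule has_vector_derivative_sum)
    fix j
    have "((\<lambda>s. s ^ (j + 1) / fact (j + 1)) has_real_derivative real (j + 1) * s ^ (j + 1 - Suc 0) / fact (j + 1)) (at s within {0..t})"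
      by (intro DERIV_cdivide DERIV_pow)
    moreover have "real (j + 1) * s ^ (j + 1 - Suc 0) / fact (j + 1) = s ^ j / fact j"
      by (simp add: fact_Suc del: of_nat_Suc)
    ultimately have "((\<lambda>s. s ^ (j + 1) / fact (j + 1)) has_real_derivative s ^ j / fact j) (at s within {0..t})"
      by simp
    then show "((\<lambda>s. (s ^ (j + 1) / fact (j + 1)) *\<^sub>R mpow A j) has_vector_derivative
        (s ^ j / fact j) *\<^sub>R mpow A j) (at s within {0..t})"
      using has_vector_derivative_scaleR[OF _ has_vector_derivative_const[of "mpow A j"]] by force
  qed
  have "((\<lambda>s. Q s k) has_integral F t - F 0) {0..t}"
    by (rule fundamental_theorem_of_calculus[OF assms]) (use d in auto)
  moreover have "F t - F 0 = Tm A t k" unfolding F_def Tm_def by simp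
  ultimately show ?thesis by simp
qed

lemma Q_v: "Q s k *v v = (\<Sum>j<k. (s ^ j / fact j) *\<^sub>R (mpow A j *v v))"
  unfolding Q_def sum_mv smv ..

definition "E s = mexp (s *\<^sub>R A)"

lemma E_int: "E integrable_on {0..t}"
  unfolding E_def by (rule integrable_continuous_real[OF mexp_cont])

lemma E_v_int: "(\<lambda>s. E s *v v) = (\<lambda>M. M *v v) \<circ> E" by auto

lemma int_E_v: "integral {0..t} E *v v = integral {0..t} (\<lambda>s. E s *v v)"
  using integral_linear[OF E_int linear_mv] unfolding E_v_int by simp

lemma int_E_v_int: "(\<lambda>s. E s *v v) integrable_on {0..t}"
  using integrable_linear[OF E_int linear_mv] unfolding E_v_int by simp

lemma M_T_bound: assumes "0 < t"
  shows "Nn (integral {0..t} E *v v - Tm A t k *v v) \<le> t * theta (t * a) k * Nn v"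
proof -
  have Qi: "((\<lambda>s. Q s k *v v) has_integral Tm A t k *v v) {0..t}"
    using has_integral_linear[OF Q_integral[of t k] linear_mv] assms by (simp add: o_def)
  have eq: "integral {0..t} E *v v - Tm A t k *v v = integral {0..t} (\<lambda>s. E s *v v - Q s k *v v)"
    unfolding int_E_v using integral_diff[OF int_E_v_int has_integral_integrable[OF Qi]]
      integral_unique[OF Qi] by simp
  have "Nn (integral {0..t} (\<lambda>s. E s *v v - Q s k *v v)) \<le> integral {0..t} (\<lambda>s. theta (t * a) k * Nn v)"
  proof (rule int_bound[OF _ _ assms])
    show "(\<lambda>s. E s *v v - Q s k *v v) integrable_on {0..t}"
      by (rule integrable_diff[OF int_E_v_int has_integral_integrable[OF Qi]])
    show "(\<lambda>s. theta (t * a) k * Nn v) integrable_on {0..t}"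
      by (rule has_integral_integrable[OF has_integral_const_real])
    fix s assume s: "s \<in> {0..t}"
    have "Nn (E s *v v - Q s k *v v) \<le> theta (\<bar>s\<bar> * a) k * Nn v"
      unfolding E_def Q_v by (rule tail_bound)
    also have "\<dots> \<le> theta (t * a) k * Nn v"
      using s a_nonneg by (intro mult_right_mono theta_mono nonneg mult_right_mono) auto
    finally show "Nn (E s *v v - Q s k *v v) \<le> theta (t * a) k * Nn v" .
  qed
  also have "\<dots> = t * theta (t * a) k * Nn v" using assms by simp
  finally show ?thesis using eq by simp
qed

end


lemma hdist_le:
  assumes "X \<noteq> {}" "Y \<noteq> {}" "\<And>z. 0 \<le> N z"
    and "\<And>x. x \<in> X \<Longrightarrow> \<exists>y\<in>Y. N (x - y) \<le> D"
    and "\<And>y. y \<in> Y \<Longrightarrow> \<exists>x\<in>X. N (x - y) \<le> D"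
  shows "hdist N X Y \<le> D"
proof -
  have 1: "(SUP x\<in>X. INF y\<in>Y. N (x - y)) \<le> D"
  proof (rule cSUP_least[OF assms(1)])
    fix x assume "x \<in> X"
    then obtain y where "y \<in> Y" "N (x - y) \<le> D" using assms(4) by blast
    moreover have "bdd_below ((\<lambda>y. N (x - y)) ` Y)" using assms(3) by (intro bdd_belowI2) 
    ultimately show "(INF y\<in>Y. N (x - y)) \<le> D" by (intro cINF_lower2) auto
  qed
  have 2: "(SUP y\<in>Y. INF x\<in>X. N (x - y)) \<le> D"
  proof (rule cSUP_least[OF assms(2)])
    fix y assume "y \<in> Y"
    then obtain x where "x \<in> X" "N (x - y) \<le> D" using assms(5) by blast
    moreover have "bdd_below ((\<lambda>x. N (x - y)) ` X)" using assms(3) by (intro bdd_belowI2)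
    ultimately show "(INF x\<in>X. N (x - y)) \<le> D" by (intro cINF_lower2) auto
  qed
  show ?thesis unfolding hdist_def using 1 2 by simp
qed

lemma omega_props:
  fixes Nn :: "real^'n \<Rightarrow> real" and Np :: "real^'p \<Rightarrow> real" and G :: "real^'p^'n"
  assumes n: "is_norm Nn" and p: "is_norm Np"
    and O: "\<Omega> = {c + G *v b | b. b \<in> unit_ball Np}"
  shows "closed \<Omega>" "convex \<Omega>" "c \<in> \<Omega>" "\<And>x. x \<in> \<Omega> \<Longrightarrow> Nn x \<le> set_norm Nn \<Omega>"
    "\<And>b. b \<in> unit_ball Np \<Longrightarrow> Nn (G *v b) \<le> set_norm Nn \<Omega>" "0 \<le> set_norm Nn \<Omega>"
proof -
  interpret n: gnorm Nn by (rule gnorm.intro[OF n])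
  interpret p: gnorm Np by (rule gnorm.intro[OF p])
  have Oimg: "\<Omega> = (\<lambda>b. c + G *v b) ` {b. Np b \<le> 1}" unfolding O unit_ball_def by auto
  have "compact \<Omega>" unfolding Oimg
    by (intro compact_continuous_image p.compact_le continuous_intros)
  then show "closed \<Omega>" by (rule compact_imp_closed)
  show "convex \<Omega>"
  proof (rule convexI)
    fix x y u v :: real
    fix x y :: "real^'n" and u v :: real
    assume "x \<in> \<Omega>" "y \<in> \<Omega>" "0 \<le> u" "0 \<le> v" "u + v = 1"
    then obtain b1 b2 where b: "x = c + G *v b1" "y = c + G *v b2" "Np b1 \<le> 1" "Np b2 \<le> 1"
      unfolding Oimg by auto
    have "u *\<^sub>R b1 + v *\<^sub>R b2 \<in> {b. Np b \<le> 1}"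
      using p.convex_le[of 1] b(3,4) \<open>0 \<le> u\<close> \<open>0 \<le> v\<close> \<open>u + v = 1\<close> unfolding convex_def by blast
    moreover have "u *\<^sub>R x + v *\<^sub>R y = c + G *v (u *\<^sub>R b1 + v *\<^sub>R b2)"
    proof -
      have "u *\<^sub>R x + v *\<^sub>R y = (u + v) *\<^sub>R c + (u *\<^sub>R (G *v b1) + v *\<^sub>R (G *v b2))"
        unfolding b by (simp add: algebra_simps)
      also have "\<dots> = c + G *v (u *\<^sub>R b1 + v *\<^sub>R b2)"
        using \<open>u + v = 1\<close> by (simp add: matrix_vector_right_distrib matrix_vector_mult_scaleR)
      finally show ?thesis .
    qed
    ultimately show "u *\<^sub>R x + v *\<^sub>R y \<in> \<Omega>" unfolding Oimg by blast
  qed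
  show cO: "c \<in> \<Omega>" unfolding Oimg by (rule image_eqI[of _ _ 0]) auto
  obtain g where g: "\<And>b. Nn (G *v b) \<le> g * Np b" using ind_norm_bound(1)[OF p n, of G] by blast
  have bdd: "bdd_above (Nn ` \<Omega>)"
  proof (rule bdd_aboveI2)
    fix x assume "x \<in> \<Omega>"
    then obtain b where "x = c + G *v b" "Np b \<le> 1" unfolding Oimg by auto
    then have "Nn x \<le> Nn c + g * Np b" using n.triangle[of c "G *v b"] g[of b] by simp
    also have "\<dots> \<le> Nn c + \<bar>g\<bar>"
    proof -
      have "g * Np b \<le> \<bar>g\<bar> * Np b" using p.nonneg[of b] by (intro mult_right_mono) auto
      also have "\<dots> \<le> \<bar>g\<bar>" using \<open>Np b \<le> 1\<close> by (intro mult_left_le) auto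
      finally show ?thesis by simp
    qed
    finally show "Nn x \<le> Nn c + \<bar>g\<bar>" .
  qed
  show le: "\<And>x. x \<in> \<Omega> \<Longrightarrow> Nn x \<le> set_norm Nn \<Omega>"
    unfolding set_norm_def using bdd by (intro cSup_upper) auto
  show "0 \<le> set_norm Nn \<Omega>" using le[OF cO] n.nonneg[of c] by linarith
  fix b assume b: "b \<in> unit_ball Np"
  then have b': "- b \<in> unit_ball Np" unfolding unit_ball_def by (simp add: p.minus)
  have x1: "c + G *v b \<in> \<Omega>" using b O by blast
  have x2: "c + G *v (- b) \<in> \<Omega>" using b' O by blast
  have mb: "G *v (- b) = - (G *v b)" using matrix_vector_mult_scaleR[of G "-1" b] by simp
  have eqX: "G *v b = (1/2) *\<^sub>R ((c + G *v b) - (c + G *v (- b)))"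
  proof -
    have "(c + G *v b) - (c + G *v (- b)) = 2 *\<^sub>R (G *v b)" unfolding mb scaleR_2 by simp
    then show ?thesis by simp
  qed
  have "Nn (G *v b) = (1/2) * Nn ((c + G *v b) - (c + G *v (- b)))"
    using arg_cong[of _ _ Nn, OF eqX] n.scale[of "1/2"] by simp
  also have "\<dots> \<le> (1/2) * (Nn (c + G *v b) + Nn (c + G *v (- b)))"
    using n.diff_le[of "c + G *v b" "c + G *v (- b)"] by (intro mult_left_mono) auto
  also have "\<dots> \<le> (1/2) * (set_norm Nn \<Omega> + set_norm Nn \<Omega>)"
    using le[OF x1] le[OF x2] by simp
  finally show "Nn (G *v b) \<le> set_norm Nn \<Omega>" by simp
qed

context msetup begin

lemma lebI: "{0..t::real} \<in> sets lebesgue" by simp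

lemma bilin_mv: "bilinear (\<lambda>(M::real^'n^'n) v. M *v v)"
  unfolding bilinear_def
  using bounded_linear.linear[OF linear_mv] bounded_linear.linear[OF matrix_vector_mul_bounded_linear]
  by auto

lemma integrable_Ew:
  assumes w: "w measurable_on {0..t}" and R: "\<And>s. s \<in> {0..t} \<Longrightarrow> Nn (w s) \<le> R"
  shows "(\<lambda>s. E s *v w s) integrable_on {0..t}" "w integrable_on {0..t}"
proof -
  obtain cc where cc: "cc > 0" "\<And>x. cc * norm x \<le> Nn x" using lower by blast
  have wm: "w \<in> borel_measurable (lebesgue_on {0..t})"
    using w measurable_on_iff_borel_measurable[OF lebI] by blast
  have Em: "E \<in> borel_measurable (lebesgue_on {0..t})"
    unfolding E_def by (rule continuous_imp_measurable_on_sets_lebesgue[OF mexp_cont lebI])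
  have Ewm: "(\<lambda>s. E s *v w s) \<in> borel_measurable (lebesgue_on {0..t})"
    using borel_measurable_bilinear[OF bilin_mv Em wm lebI] by simp
  have nb: "norm x \<le> Nn x / cc" for x using cc(2)[of x] cc(1) by (simp add: field_simps)
  show "(\<lambda>s. E s *v w s) integrable_on {0..t}"
  proof (rule measurable_bounded_by_integrable_imp_integrable[OF Ewm _ _ lebI])
    show "(\<lambda>s. exp (\<bar>t\<bar> * a) * R / cc) integrable_on {0..t}"
      by (rule has_integral_integrable[OF has_integral_const_real])
    fix s assume s: "s \<in> {0..t}"
    have "Nn (E s *v w s) \<le> exp (s * a) * Nn (w s)" unfolding E_def
      using exp_bound(2) s by auto
    also have "\<dots> \<le> exp (\<bar>t\<bar> * a) * R"
      using s R[OF s] a_nonneg nonneg[of "w s"]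
      by (intro mult_mono) (auto intro: mult_right_mono)
    finally show "norm (E s *v w s) \<le> exp (\<bar>t\<bar> * a) * R / cc"
      using nb[of "E s *v w s"] cc(1) by (smt (verit) divide_right_mono)
  qed
  show "w integrable_on {0..t}"
  proof (rule measurable_bounded_by_integrable_imp_integrable[OF wm _ _ lebI])
    show "(\<lambda>s. R / cc) integrable_on {0..t}"
      by (rule has_integral_integrable[OF has_integral_const_real])
    fix s assume s: "s \<in> {0..t}"
    show "norm (w s) \<le> R / cc" using nb[of "w s"] R[OF s] cc(1) by (smt (verit) divide_right_mono)
  qed
qed

end


lemma not_inv0: "\<not> invertible (0::real^'n^'n)"
proof
  assume "invertible (0::real^'n^'n)"
  then obtain B :: "real^'n^'n" where "0 ** B = mat 1" unfolding invertible_def by blast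
  then have "(mat 1 :: real^'n^'n) = 0" by simp
  then have "(mat 1 :: real^'n^'n) $ undefined $ undefined = 0" by simp
  then show False by (simp add: mat_def)
qed

theorem lemma13:
  fixes Nn :: "real^'n \<Rightarrow> real" and Np :: "real^'p \<Rightarrow> real"
    and A :: "real^'n^'n" and c :: "real^'n" and G :: "real^'p^'n"
    and T t \<epsilon> :: real
  assumes "is_norm Nn" and "is_norm Np"
    and "rank G = CARD('n)"
    and "T > 0"
    and "0 \<le> \<epsilon>" and "\<epsilon> < 1"
    and "t \<in> Iset A" and "0 \<le> t" and "t \<le> T"
    and "t * ind_norm Nn Nn A \<le> 1"
  shows "hdist Nn (Iapprox Nn Np A t c G \<epsilon>)
           (set_integral_mv (\<lambda>s. mexp (s *\<^sub>R A)) t {c + G *v b | b. b \<in> unit_ball Np})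
         \<le> 2 * ((1 - \<epsilon>) * t + t\<^sup>2 * ind_norm Nn Nn A) * exp (T * ind_norm Nn Nn A)
             * set_norm Nn {c + G *v b | b. b \<in> unit_ball Np}"
proof -
  interpret m: msetup Nn A by unfold_locales (rule assms(1))
  interpret p: gnorm Np by unfold_locales (rule assms(2))
  define a where "a = ind_norm Nn Nn A"
  have aa: "m.a = a" unfolding a_def m.a_def ..
  have a0: "0 \<le> a" using m.a_nonneg aa by simp
  define \<Omega> where "\<Omega> = {c + G *v b | b. b \<in> unit_ball Np}"
  define R where "R = set_norm Nn \<Omega>"
  note OP = omega_props[OF assms(1,2) \<Omega>_def]
  have R0: "0 \<le> R" unfolding R_def by (rule OP(6))
  have RO: "\<And>x. x \<in> \<Omega> \<Longrightarrow> Nn x \<le> R" unfolding R_def by (rule OP(4))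
  have RG: "\<And>b. b \<in> unit_ball Np \<Longrightarrow> Nn (G *v b) \<le> R" unfolding R_def by (rule OP(5))
  have Efun: "(\<lambda>s. mexp (s *\<^sub>R A)) = m.E" unfolding m.E_def ..
  define M where "M = integral {0..t} m.E"
  have Minv: "invertible M" using assms(7) unfolding Iset_def M_def Efun by simp
  have t0: "0 < t"
  proof (rule ccontr)
    assume "\<not> 0 < t"
    then have "t = 0" using assms(8) by simp
    then have "M = 0" unfolding M_def by simp
    then show False using Minv not_inv0 by metis
  qed
  define E1 where "E1 = exp (t * a)"
  define ET where "ET = exp (T * a)"
  have E1ET: "E1 \<le> ET" unfolding E1_def ET_def using assms(9) a0 by (simp add: mult_right_mono)
  have E10: "0 < E1" unfolding E1_def by simp
  have MT: "\<And>k v. Nn (M *v v - Tm A t k *v v) \<le> t * theta (t * a) k * Nn v"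
    using m.M_T_bound[OF t0] unfolding M_def aa .
  have TB: "\<And>k v. Nn (Tm A t k *v v) \<le> t * E1 * Nn v"
    using m.Tm_bound[OF assms(8)] unfolding E1_def aa .
  define L where "L k = lam Nn Np A t c G k" for k
  have exK: "\<exists>k. L k > \<epsilon> \<and> invertible (Tm A t k)"
  proof -
    have th: "(\<lambda>k. theta (t * a) k) \<longlonglongrightarrow> 0" by (rule theta_lim)
    have "(\<lambda>k. L k) \<longlonglongrightarrow> (1 - exp (t * a) * 0 * ind_norm Nn Np (mp_inverse G) * Nn c) /
        (1 + exp (t * a) * 0 * ind_norm Nn Np (mp_inverse G) * ind_norm Np Nn G)"
      unfolding L_def lam_def Let_def a_def[symmetric]
      by (intro tendsto_intros th) simp
    then have "(\<lambda>k. L k) \<longlonglongrightarrow> 1" by simp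
    then have ev1: "eventually (\<lambda>k. L k > \<epsilon>) sequentially"
      using assms(6) by (rule order_tendstoD(1))
    obtain B where B: "B ** M = mat 1" using Minv unfolding invertible_def by blast
    define b2 where "b2 = ind_norm Nn Nn B"
    have b20: "0 \<le> b2" unfolding b2_def by (rule ind_norm_bound(2)[OF assms(1) assms(1)])
    have Bv: "Nn v \<le> b2 * Nn (M *v v)" for v
    proof -
      have "v = B *v (M *v v)" by (simp add: matrix_vector_mul_assoc B)
      then show ?thesis unfolding b2_def using ind_norm_bound(1)[OF assms(1) assms(1), of B "M *v v"]
        by simp
    qed
    have "(\<lambda>k. b2 * (t * theta (t * a) k)) \<longlonglongrightarrow> b2 * (t * 0)" by (intro tendsto_intros th)
    then have ev2: "eventually (\<lambda>k. b2 * (t * theta (t * a) k) < 1) sequentially"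
      by (intro order_tendstoD(2)) auto
    have ev3: "eventually (\<lambda>k. invertible (Tm A t k)) sequentially"
      using ev2
    proof (rule eventually_mono)
      fix k assume k: "b2 * (t * theta (t * a) k) < 1"
      have "\<forall>v. Tm A t k *v v = 0 \<longrightarrow> v = 0"
      proof (intro allI impI)
        fix v assume "Tm A t k *v v = 0"
        then have "Nn (M *v v) \<le> t * theta (t * a) k * Nn v" using MT[where k=k and v=v] by simp
        then have "Nn v \<le> b2 * (t * theta (t * a) k * Nn v)"
          using Bv[of v] b20 by (meson mult_left_mono order_trans)
        then have "Nn v * (1 - b2 * (t * theta (t * a) k)) \<le> 0" by (simp add: algebra_simps)
        then have "Nn v \<le> 0" using k by (simp add: mult_le_0_iff)
        then show "v = 0" using m.nonneg[of v] m.zero_iff[of v] by linarith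
      qed
      then obtain B' where "B' ** Tm A t k = mat 1" using matrix_left_invertible_ker by blast
      then show "invertible (Tm A t k)" unfolding invertible_def
        using matrix_left_right_inverse by blast
    qed
    have "eventually (\<lambda>k. L k > \<epsilon> \<and> invertible (Tm A t k)) sequentially"
      using ev1 ev3 by (rule eventually_conj)
    then obtain N0 where "\<forall>n\<ge>N0. L n > \<epsilon> \<and> invertible (Tm A t n)"
      unfolding eventually_sequentially by blast
    then show ?thesis by blast
  qed
  define k where "k = eta Nn Np A t c G \<epsilon>"
  have kprop: "L k > \<epsilon> \<and> invertible (Tm A t k)"
    unfolding k_def eta_def L_def[symmetric] using exK by (rule LeastI_ex)
  define lm where "lm = L k"
  have lm_eps: "\<epsilon> < lm" using kprop lm_def by simp
  have lm1: "lm \<le> 1"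
  proof -
    have "0 \<le> exp (t * a) * theta (t * a) k" using theta_nonneg[of "t * a" k] t0 a0 by simp
    moreover have "0 \<le> ind_norm Nn Np (mp_inverse G)" by (rule ind_norm_bound(2)[OF assms(1,2)])
    moreover have "0 \<le> ind_norm Np Nn G" by (rule ind_norm_bound(2)[OF assms(2,1)])
    ultimately have "0 \<le> exp (t * a) * theta (t * a) k * ind_norm Nn Np (mp_inverse G) * Nn c"
      "0 \<le> exp (t * a) * theta (t * a) k * ind_norm Nn Np (mp_inverse G) * ind_norm Np Nn G"
      using m.nonneg[of c] by auto
    then show ?thesis unfolding lm_def L_def lam_def Let_def a_def[symmetric]
      by (simp add: divide_le_eq_1)
  qed
  have k1: "1 \<le> k"
  proof (rule ccontr)
    assume "\<not> 1 \<le> k" then have "k = 0" by simp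
    then have "Tm A t k = 0" unfolding Tm_def by simp
    then show False using kprop not_inv0 by metis
  qed
  have thk: "theta (t * a) k \<le> t * a * E1"
    using theta_le1[OF _ k1, of "t * a"] exp_m1_le[of "t * a"] t0 a0 unfolding E1_def by simp
  define Tk where "Tk = Tm A t k"
  have MTk: "Nn (Tk *v v - M *v v) \<le> t * (t * a * E1) * Nn v" for v
  proof -
    have "Nn (Tk *v v - M *v v) = Nn (M *v v - Tk *v v)" by (rule m.commute_diff)
    also have "\<dots> \<le> t * theta (t * a) k * Nn v" unfolding Tk_def by (rule MT)
    also have "\<dots> \<le> t * (t * a * E1) * Nn v"
      using thk t0 m.nonneg[of v] by (intro mult_right_mono mult_left_mono) auto
    finally show ?thesis .
  qed
  have Tscal: "Nn (Tk *v ((lm - 1) *\<^sub>R (G *v b))) \<le> t * E1 * ((1 - \<epsilon>) * R)"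
    if b: "b \<in> unit_ball Np" for b
  proof -
    have "Nn (Tk *v ((lm - 1) *\<^sub>R (G *v b))) \<le> t * E1 * Nn ((lm - 1) *\<^sub>R (G *v b))"
      unfolding Tk_def by (rule TB)
    also have "Nn ((lm - 1) *\<^sub>R (G *v b)) = (1 - lm) * Nn (G *v b)" using lm1 by (simp add: m.scale)
    also have "(1 - lm) * Nn (G *v b) \<le> (1 - \<epsilon>) * R"
      using lm_eps lm1 RG[OF b] m.nonneg[of "G *v b"] assms(5,6) by (intro mult_mono) auto
    finally show ?thesis using t0 E10 by (simp add: mult_left_mono)
  qed
  have Xeq: "Iapprox Nn Np A t c G \<epsilon> = (\<lambda>x. Tk *v x) ` {c + lm *\<^sub>R (G *v b) | b. b \<in> unit_ball Np}"
    unfolding Iapprox_def Let_def k_def[symmetric] Tk_def lm_def L_def ..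
  have Yeq: "set_integral_mv (\<lambda>s. mexp (s *\<^sub>R A)) t \<Omega> =
      {integral {0..t} (\<lambda>s. m.E s *v w s) | w. w measurable_on {0..t} \<and> (\<forall>s\<in>{0..t}. w s \<in> \<Omega>)}"
    unfolding set_integral_mv_def Efun ..
  have B0: "0 \<in> unit_ball Np" unfolding unit_ball_def by simp
  define D where "D = 2 * ((1 - \<epsilon>) * t + t\<^sup>2 * a) * ET * R"
  have fin: "(1 - \<epsilon>) * t * E1 * R + 2 * (t\<^sup>2 * a * E1 * R) \<le> D"
  proof -
    have p0: "0 \<le> (1 - \<epsilon>) * t" using assms(6) t0 by simp
    have q0: "0 \<le> t\<^sup>2 * a" using a0 by simp
    have "(1 - \<epsilon>) * t * E1 * R \<le> (1 - \<epsilon>) * t * ET * R"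
      using p0 E1ET R0 by (intro mult_right_mono mult_left_mono) auto
    moreover have "t\<^sup>2 * a * E1 * R \<le> t\<^sup>2 * a * ET * R"
      using q0 E1ET R0 by (intro mult_right_mono mult_left_mono) auto
    moreover have "0 \<le> (1 - \<epsilon>) * t * ET * R" using p0 E1ET E10 R0 by simp
    ultimately show ?thesis unfolding D_def by (simp add: algebra_simps)
  qed
  have "hdist Nn (Iapprox Nn Np A t c G \<epsilon>) (set_integral_mv (\<lambda>s. mexp (s *\<^sub>R A)) t \<Omega>) \<le> D"
  proof (rule hdist_le)
    show "Iapprox Nn Np A t c G \<epsilon> \<noteq> {}" unfolding Xeq using B0 by blast
    show "set_integral_mv (\<lambda>s. mexp (s *\<^sub>R A)) t \<Omega> \<noteq> {}"
      unfolding Yeq using OP(3) by (auto intro!: exI[of _ "\<lambda>s. c"] measurable_on_const[OF m.lebI])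
    show "\<And>z. 0 \<le> Nn z" by (rule m.nonneg)
  next
    fix x assume "x \<in> Iapprox Nn Np A t c G \<epsilon>"
    then obtain b where b: "b \<in> unit_ball Np" and x: "x = Tk *v (c + lm *\<^sub>R (G *v b))"
      unfolding Xeq by blast
    define \<omega> where "\<omega> = c + G *v b"
    have \<omega>O: "\<omega> \<in> \<Omega>" unfolding \<omega>_def \<Omega>_def using b by blast
    define y where "y = integral {0..t} (\<lambda>s. m.E s *v \<omega>)"
    have yY: "y \<in> set_integral_mv (\<lambda>s. mexp (s *\<^sub>R A)) t \<Omega>"
      unfolding Yeq y_def using \<omega>O by (auto intro!: exI[of _ "\<lambda>s. \<omega>"] measurable_on_const[OF m.lebI])
    have yM: "y = M *v \<omega>" unfolding y_def M_def m.int_E_v ..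
    have "x - y = Tk *v ((lm - 1) *\<^sub>R (G *v b)) + (Tk *v \<omega> - M *v \<omega>)"
      unfolding x yM \<omega>_def
      by (simp add: matrix_vector_right_distrib matrix_vector_mult_scaleR algebra_simps)
    then have "Nn (x - y) \<le> Nn (Tk *v ((lm - 1) *\<^sub>R (G *v b))) + Nn (Tk *v \<omega> - M *v \<omega>)"
      using m.triangle by simp
    also have "\<dots> \<le> t * E1 * ((1 - \<epsilon>) * R) + t * (t * a * E1) * R"
      using Tscal[OF b] MTk[of \<omega>] RO[OF \<omega>O] t0 a0 E10
      by (smt (verit) mult_left_mono mult_nonneg_nonneg)
    also have "\<dots> \<le> D"
    proof -
      have nn: "0 \<le> t\<^sup>2 * a * E1 * R" using R0 a0 E10 by simp
      have "t * E1 * ((1 - \<epsilon>) * R) + t * (t * a * E1) * R = (1 - \<epsilon>) * t * E1 * R + t\<^sup>2 * a * E1 * R"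
        by (simp add: power2_eq_square algebra_simps)
      then show ?thesis using fin nn by linarith
    qed
    finally show "\<exists>y\<in>set_integral_mv (\<lambda>s. mexp (s *\<^sub>R A)) t \<Omega>. Nn (x - y) \<le> D"
      using yY by blast
  next
    fix y assume "y \<in> set_integral_mv (\<lambda>s. mexp (s *\<^sub>R A)) t \<Omega>"
    then obtain w where w: "w measurable_on {0..t}" "\<And>s. s \<in> {0..t} \<Longrightarrow> w s \<in> \<Omega>"
      and y: "y = integral {0..t} (\<lambda>s. m.E s *v w s)"
      unfolding Yeq by blast
    have wR: "\<And>s. s \<in> {0..t} \<Longrightarrow> Nn (w s) \<le> R" using w(2) RO by blast
    note wint = m.integrable_Ew[OF w(1) wR]
    define \<omega> where "\<omega> = (1/t) *\<^sub>R integral {0..t} w"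
    have \<omega>O: "\<omega> \<in> \<Omega>" unfolding \<omega>_def by (rule mean_in[OF wint(2) t0 OP(1,2) w(2)])
    then obtain b where b: "b \<in> unit_ball Np" and \<omega>: "\<omega> = c + G *v b" unfolding \<Omega>_def by blast
    define x where "x = Tk *v (c + lm *\<^sub>R (G *v b))"
    have xX: "x \<in> Iapprox Nn Np A t c G \<epsilon>" unfolding Xeq x_def using b by blast
    have intw: "integral {0..t} w = t *\<^sub>R \<omega>" unfolding \<omega>_def using t0 by simp
    define z where "z s = \<omega> - w s" for s
    have zint: "z integrable_on {0..t}" unfolding z_def
      by (intro integrable_diff wint(2) has_integral_integrable[OF has_integral_const_real])
    have intz: "integral {0..t} z = 0" unfolding z_def
      using integral_diff[OF has_integral_integrable[OF has_integral_const_real] wint(2)] intw t0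
      by simp
    have Ezint: "(\<lambda>s. m.E s *v z s) integrable_on {0..t}"
      unfolding z_def by (simp add: matrix_vector_mult_diff_distrib)
        (intro integrable_diff m.int_E_v_int wint(1))
    have My: "M *v \<omega> - y = integral {0..t} (\<lambda>s. m.E s *v z s - z s)"
    proof -
      have "integral {0..t} (\<lambda>s. m.E s *v z s - z s) = integral {0..t} (\<lambda>s. m.E s *v z s) - integral {0..t} z"
        by (rule integral_diff[OF Ezint zint])
      also have "\<dots> = integral {0..t} (\<lambda>s. m.E s *v z s)" using intz by simp
      also have "\<dots> = integral {0..t} (\<lambda>s. m.E s *v \<omega> - m.E s *v w s)"
        unfolding z_def by (simp add: matrix_vector_mult_diff_distrib)
      also have "\<dots> = integral {0..t} (\<lambda>s. m.E s *v \<omega>) - integral {0..t} (\<lambda>s. m.E s *v w s)"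
        by (rule integral_diff[OF m.int_E_v_int wint(1)])
      also have "\<dots> = M *v \<omega> - y" unfolding y M_def m.int_E_v ..
      finally show ?thesis by simp
    qed
    have bnd3: "Nn (M *v \<omega> - y) \<le> t\<^sup>2 * a * E1 * R"
    proof -
      have "Nn (integral {0..t} (\<lambda>s. m.E s *v z s - z s)) \<le> integral {0..t} (\<lambda>s. (2 * R * a * E1) * s)"
      proof (rule m.int_bound[OF _ _ t0])
        show "(\<lambda>s. m.E s *v z s - z s) integrable_on {0..t}" by (intro integrable_diff Ezint zint)
        show "(\<lambda>s. (2 * R * a * E1) * s) integrable_on {0..t}"
          by (intro integrable_continuous_real continuous_intros)
        fix s assume s: "s \<in> {0..t}"
        have "Nn (m.E s *v z s - z s) \<le> (exp (s * a) - 1) * Nn (z s)"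
          unfolding m.E_def aa[symmetric] using m.exp_bound(1) s by simp
        also have "\<dots> \<le> (s * a * E1) * (2 * R)"
        proof (rule mult_mono)
          have "exp (s * a) - 1 \<le> s * a * exp (s * a)" using exp_m1_le[of "s * a"] s a0 by simp
          also have "\<dots> \<le> s * a * E1" unfolding E1_def using s a0
            by (intro mult_left_mono) (auto simp: mult_right_mono)
          finally show "exp (s * a) - 1 \<le> s * a * E1" .
          show "Nn (z s) \<le> 2 * R" unfolding z_def
            using m.diff_le[of \<omega> "w s"] RO[OF \<omega>O] wR[OF s] by simp
          show "0 \<le> s * a * E1" using s a0 E10 by simp
        qed (rule m.nonneg)
        finally show "Nn (m.E s *v z s - z s) \<le> (2 * R * a * E1) * s" by (simp add: algebra_simps)
      qed
      also have "\<dots> = (2 * R * a * E1) * (t\<^sup>2 / 2)"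
        using integral_mult_right integral_ident[of 0 t] t0 by simp
      finally show ?thesis using My by (simp add: algebra_simps)
    qed
    have "x - y = Tk *v ((lm - 1) *\<^sub>R (G *v b)) + (Tk *v \<omega> - M *v \<omega>) + (M *v \<omega> - y)"
      unfolding x_def \<omega>
      by (simp add: matrix_vector_right_distrib matrix_vector_mult_scaleR algebra_simps)
    then have "Nn (x - y) \<le> Nn (Tk *v ((lm - 1) *\<^sub>R (G *v b))) + Nn (Tk *v \<omega> - M *v \<omega>) + Nn (M *v \<omega> - y)"
      using m.triangle by (smt (verit))
    also have "\<dots> \<le> t * E1 * ((1 - \<epsilon>) * R) + t * (t * a * E1) * R + t\<^sup>2 * a * E1 * R"
      using Tscal[OF b] MTk[of \<omega>] RO[OF \<omega>O] bnd3 t0 a0 E10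
      by (smt (verit) mult_left_mono mult_nonneg_nonneg)
    also have "\<dots> \<le> D"
    proof -
      have "t * E1 * ((1 - \<epsilon>) * R) + t * (t * a * E1) * R + t\<^sup>2 * a * E1 * R = (1 - \<epsilon>) * t * E1 * R + 2 * (t\<^sup>2 * a * E1 * R)"
        by (simp add: power2_eq_square algebra_simps)
      then show ?thesis using fin by linarith
    qed
    finally show "\<exists>x\<in>Iapprox Nn Np A t c G \<epsilon>. Nn (x - y) \<le> D"
      using xX by blast
  qed
  then show ?thesis unfolding D_def R_def \<Omega>_def ET_def a_def .
qed


end
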